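(* Let $Q\subset\mathbb R^2$ be a polygonal set with center of mass $\overline{\mathbf x}_Q$, and let $\mathcal T^Q$ be a conforming triangulation of $Q$ into triangles, with set of triangles $\mathcal M^Q$ and set of boundary edges $\mathcal E^Q_{\rm ext}$ (edges lying on $\partial Q$). For each triangle $T$ let $\mathbf c_T$ be its circumcenter and $\overline{\mathbf x}_T$ its center of mass; for each edge $\sigma$ let $\mathbf a_1^\sigma,\mathbf a_2^\sigma$ be its endpoints. Then $$\sum_{T\in\mathcal M^Q}|T|(\mathbf c_T-\overline{\mathbf x}_T)=\sum_{\sigma\in\mathcal E^Q_{\rm ext}}|\sigma|\,\frac{|\mathbf a_1^\sigma-\overline{\mathbf x}_Q|^2+|\mathbf a_2^\sigma-\overline{\mathbf x}_Q|^2}{4}\,\mathbf n_{Q,\sigma},$$ where $\mathbf n_{Q,\sigma}$ is the unit outer normal to $Q$ on $\sigma$ and $|T|,|\sigma|$ are area and length.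
   Context: A conforming triangulation: triangles with pairwise disjoint interiors covering $Q$, any two of which intersect in empty set, a common vertex, or a common edge. *)

theory Defs
  imports "HOL-Analysis.Analysis"
begin

type_synonym pt = "real ^ 2"

definition is_triangle :: "pt set \<Rightarrow> bool" where
  "is_triangle T \<longleftrightarrow> (\<exists>a b c. \<not> collinear {a, b, c} \<and> T = convex hull {a, b, c})"

definition vertices :: "pt set \<Rightarrow> pt set" where
  "vertices T = {v. v extreme_point_of T}"

definition edges :: "pt set \<Rightarrow> pt set set" where
  "edges T = {closed_segment a b | a b. a \<in> vertices T \<and> b \<in> vertices T \<and> a \<noteq> b}"

definition endpoints :: "pt set \<Rightarrow> pt set" where
  "endpoints s = {v. v extreme_point_of s}"

definition seg_length :: "pt set \<Rightarrow> real" where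
  "seg_length s = diameter s"

definition area :: "pt set \<Rightarrow> real" where
  "area S = measure lebesgue S"

definition center_of_mass :: "pt set \<Rightarrow> pt" where
  "center_of_mass S = (1 / area S) *\<^sub>R integral S (\<lambda>x. x)"

definition circumcenter :: "pt set \<Rightarrow> pt" where
  "circumcenter T = (THE c. \<exists>r. \<forall>v \<in> vertices T. dist c v = r)"

definition conforming_triangulation :: "pt set set \<Rightarrow> pt set \<Rightarrow> bool" where
  "conforming_triangulation M Q \<longleftrightarrow>
     finite M \<and> (\<forall>T\<in>M. is_triangle T) \<and> \<Union>M = Q \<and>
     (\<forall>T1\<in>M. \<forall>T2\<in>M. T1 \<noteq> T2 \<longrightarrow> interior T1 \<inter> interior T2 = {}) \<and>
     (\<forall>T1\<in>M. \<forall>T2\<in>M. T1 \<noteq> T2 \<longrightarrow>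
        T1 \<inter> T2 = {} \<or>
        (\<exists>v. v \<in> vertices T1 \<and> v \<in> vertices T2 \<and> T1 \<inter> T2 = {v}) \<or>
        (\<exists>e. e \<in> edges T1 \<and> e \<in> edges T2 \<and> T1 \<inter> T2 = e))"

definition boundary_edges :: "pt set set \<Rightarrow> pt set \<Rightarrow> pt set set" where
  "boundary_edges M Q = {e. (\<exists>T\<in>M. e \<in> edges T) \<and> e \<subseteq> frontier Q}"

text \<open>Unit outer normal to Q on the boundary segment s: the unit vector orthogonal
  to s pointing out of Q (points just outside the midpoint of s in its direction
  are not in Q).\<close>
definition outer_normal :: "pt set \<Rightarrow> pt set \<Rightarrow> pt" where
  "outer_normal Q s = (THE n. norm n = 1 \<and>
      (\<forall>a\<in>s. \<forall>b\<in>s. n \<bullet> (a - b) = 0) \<and>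
      (\<exists>\<epsilon>>0. \<forall>t. 0 < t \<and> t < \<epsilon> \<longrightarrow>
          (1/2) *\<^sub>R (\<Sum>v\<in>endpoints s. v) + t *\<^sub>R n \<notin> Q))"

end

theory Submission
  imports Defs
begin


definition cross :: "real^2 \<Rightarrow> real^2 \<Rightarrow> real" where
  "cross p q = p$1 * q$2 - p$2 * q$1"

definition coord :: "real^2 \<Rightarrow> real^2 \<Rightarrow> real^2 \<Rightarrow> real^2 \<Rightarrow> real" where
  "coord a b c y = cross (b - y) (c - y) / cross (b - a) (c - a)"

lemma cross_cyc: "cross (c - b) (a - b) = cross (b - a) (c - a)"
  by (simp add: cross_def algebra_simps)

lemma cross_swap: "cross (c - a) (b - a) = - cross (b - a) (c - a)"
  by (simp add: cross_def algebra_simps)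

lemma ct_real: fixes b1 b2 c1 c2 :: real
  assumes "b1 * c2 = b2 * c1" "b1^2 + b2^2 \<noteq> 0"
  shows "c1 = (c1*b1 + c2*b2) / (b1^2 + b2^2) * b1" "c2 = (c1*b1 + c2*b2) / (b1^2 + b2^2) * b2"
proof -
  have "c1 * (b1^2 + b2^2) = (c1*b1 + c2*b2) * b1" using assms(1) by algebra
  then show "c1 = (c1*b1 + c2*b2) / (b1^2 + b2^2) * b1" using assms(2) by (simp add: field_simps)
  have "c2 * (b1^2 + b2^2) = (c1*b1 + c2*b2) * b2" using assms(1) by algebra
  then show "c2 = (c1*b1 + c2*b2) / (b1^2 + b2^2) * b2" using assms(2) by (simp add: field_simps)
qed

lemma vec2_eq: "(x::real^2) = y \<longleftrightarrow> x$1 = y$1 \<and> x$2 = y$2"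
  by (simp add: vec_eq_iff forall_2)

lemma noncoll_cross:
  assumes "\<not> collinear {a, b, c}" shows "cross (b - a) (c - a) \<noteq> 0"
proof
  assume h: "cross (b - a) (c - a) = 0"
  have "collinear {a, b, c}"
  proof (cases "a = b")
    case True then show ?thesis by (simp add: collinear_2)
  next
    case False
    then have nz: "(b-a)$1 ^ 2 + (b-a)$2 ^ 2 \<noteq> 0"
    proof -
      have "(b-a)$1 \<noteq> 0 \<or> (b-a)$2 \<noteq> 0" using False by (auto simp: vec2_eq)
      then show ?thesis by (auto simp: add_nonneg_eq_0_iff)
    qed
    have h': "(b-a)$1 * (c-a)$2 = (b-a)$2 * (c-a)$1" using h by (simp add: cross_def)
    define t where "t = ((c-a)$1*(b-a)$1 + (c-a)$2*(b-a)$2) / ((b-a)$1 ^ 2 + (b-a)$2 ^ 2)"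
    have ct: "c - a = t *\<^sub>R (b - a)"
      unfolding vec2_eq vector_scaleR_component t_def using ct_real[OF h' nz] by simp
    have "collinear {0, b - a, c - a}"
      unfolding collinear_lemma using ct by blast
    then have "collinear {b, a, c}" using collinear_3[of b a c] by simp
    then show ?thesis by (simp add: insert_commute)
  qed
  with assms show False by simp
qed

lemma coord_unique_real:
  fixes a1 a2 b1 b2 c1 c2 u v w :: real
  assumes "u + v + w = 1"
  shows "(b1 - (u * a1 + v * b1 + w * c1)) * (c2 - (u * a2 + v * b2 + w * c2)) - (b2 - (u * a2 + v * b2 + w * c2)) * (c1 - (u * a1 + v * b1 + w * c1))
     = u * ((b1 - a1) * (c2 - a2) - (b2 - a2) * (c1 - a1))"
proof -
  have "v = 1 - u - w" using assms by simp
  then show ?thesis by algebra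
qed

lemma coord_unique:
  assumes nc: "\<not> collinear {a, b, c}" and s: "u + v + w = 1"
    and y: "y = u *\<^sub>R a + v *\<^sub>R b + w *\<^sub>R c"
  shows "coord a b c y = u"
proof -
  have D: "cross (b - a) (c - a) \<noteq> 0" using noncoll_cross[OF nc] .
  have "cross (b - y) (c - y) = u * cross (b - a) (c - a)"
    unfolding cross_def y using coord_unique_real[OF s] by simp
  then show ?thesis using D by (simp add: coord_def)
qed

lemma coord_comb_real:
  fixes xa ya xb yb xc yc xy yy :: real
  shows "((xb - xy) * (yc - yy) - (yb - yy) * (xc - xy)) * xa + ((xc - xy) * (ya - yy) - (yc - yy) * (xa - xy)) * xb
        + ((xa - xy) * (yb - yy) - (ya - yy) * (xb - xy)) * xc = ((xb - xa) * (yc - ya) - (yb - ya) * (xc - xa)) * xy"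
    and "((xb - xy) * (yc - yy) - (yb - yy) * (xc - xy)) + ((xc - xy) * (ya - yy) - (yc - yy) * (xa - xy))
        + ((xa - xy) * (yb - yy) - (ya - yy) * (xb - xy)) = ((xb - xa) * (yc - ya) - (yb - ya) * (xc - xa))"
  by algebra+

lemma coord_comb:
  assumes nc: "\<not> collinear {a, b, c}"
  shows "y = coord a b c y *\<^sub>R a + coord b c a y *\<^sub>R b + coord c a b y *\<^sub>R c"
    and "coord a b c y + coord b c a y + coord c a b y = 1"
proof -
  have D: "cross (b - a) (c - a) \<noteq> 0" using noncoll_cross[OF nc] .
  have e1: "cross (c - b) (a - b) = cross (b - a) (c - a)" "cross (a - c) (b - c) = cross (b - a) (c - a)"
    by (simp_all add: cross_def algebra_simps)

  have r1: "cross (b - y) (c - y) * a$i + cross (c - y) (a - y) * b$i + cross (a - y) (b - y) * c$i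
      = cross (b - a) (c - a) * y$i" if "i = 1 \<or> i = 2" for i
    using that coord_comb_real(1)[where xa="a$1" and ya="a$2" and xb="b$1" and yb="b$2" and xc="c$1" and yc="c$2" and xy="y$1" and yy="y$2"]
      coord_comb_real(1)[where xa="a$2" and ya="a$1" and xb="b$2" and yb="b$1" and xc="c$2" and yc="c$1" and xy="y$2" and yy="y$1"]
    by (auto simp: cross_def algebra_simps)
  have r2: "y$i = cross (b - y) (c - y) / cross (b - a) (c - a) * a$i + cross (c - y) (a - y) / cross (b - a) (c - a) * b$i
     + cross (a - y) (b - y) / cross (b - a) (c - a) * c$i" if "i = 1 \<or> i = 2" for i
  proof -
    have "y$i = (cross (b - y) (c - y) * a$i + cross (c - y) (a - y) * b$i + cross (a - y) (b - y) * c$i) / cross (b - a) (c - a)"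
      using r1[OF that] D by (simp add: eq_divide_eq)
    then show ?thesis by (simp add: add_divide_distrib)
  qed
  show "y = coord a b c y *\<^sub>R a + coord b c a y *\<^sub>R b + coord c a b y *\<^sub>R c"
    unfolding vec2_eq coord_def e1 using r2[of 1] r2[of 2] by simp
  show "coord a b c y + coord b c a y + coord c a b y = 1"
  proof -
    have "cross (b - y) (c - y) + cross (c - y) (a - y) + cross (a - y) (b - y) = cross (b - a) (c - a)"
      using coord_comb_real(2)[where xa="a$1" and ya="a$2" and xb="b$1" and yb="b$2" and xc="c$1" and yc="c$2" and xy="y$1" and yy="y$2"] by (simp add: cross_def)
    then have "(cross (b - y) (c - y) + cross (c - y) (a - y) + cross (a - y) (b - y)) / cross (b - a) (c - a) = 1"
      using D by simp
    then show ?thesis unfolding coord_def e1 by (simp add: add_divide_distrib)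
  qed
qed



lemma nc_perm:
  assumes "\<not> collinear {a, b, c}"
  shows "\<not> collinear {b, c, a}" "\<not> collinear {c, a, b}" "\<not> collinear {b, a, c}"
        "\<not> collinear {a, c, b}" "\<not> collinear {c, b, a}"
  using assms by (simp_all add: insert_commute)

lemma coord_swap: "coord a c b y = coord a b c y"
proof -
  have "cross (c - y) (b - y) = - cross (b - y) (c - y)" "cross (c - a) (b - a) = - cross (b - a) (c - a)"
    by (simp_all add: cross_def algebra_simps)
  then show ?thesis by (simp add: coord_def)
qed

lemma coord_unique3:
  assumes nc: "\<not> collinear {a, b, c}" and s: "u + v + w = 1"
    and y: "y = u *\<^sub>R a + v *\<^sub>R b + w *\<^sub>R c"
  shows "coord a b c y = u" "coord b c a y = v" "coord c a b y = w"
proof -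
  show "coord a b c y = u" by (rule coord_unique[OF nc s y])
  show "coord b c a y = v"
    by (rule coord_unique[OF nc_perm(1)[OF nc], of v w u]) (use s y in \<open>auto simp: algebra_simps\<close>)
  show "coord c a b y = w"
    by (rule coord_unique[OF nc_perm(2)[OF nc], of w u v]) (use s y in \<open>auto simp: algebra_simps\<close>)
qed

lemma coord_vertices:
  assumes nc: "\<not> collinear {a, b, c}"
  shows "coord a b c a = 1" "coord b c a a = 0" "coord c a b a = 0"
        "coord a b c b = 0" "coord b c a b = 1" "coord c a b b = 0"
        "coord a b c c = 0" "coord b c a c = 0" "coord c a b c = 1"
  using coord_unique3[OF nc, of 1 0 0 a] coord_unique3[OF nc, of 0 1 0 b] coord_unique3[OF nc, of 0 0 1 c]
  by simp_all

lemma mem_hull: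
  assumes nc: "\<not> collinear {a, b, c}"
  shows "y \<in> convex hull {a, b, c} \<longleftrightarrow> 0 \<le> coord a b c y \<and> 0 \<le> coord b c a y \<and> 0 \<le> coord c a b y"
proof
  assume "y \<in> convex hull {a, b, c}"
  then obtain u v w where "0 \<le> u" "0 \<le> v" "0 \<le> w" "u + v + w = 1" "y = u *\<^sub>R a + v *\<^sub>R b + w *\<^sub>R c"
    unfolding convex_hull_3 by blast
  then show "0 \<le> coord a b c y \<and> 0 \<le> coord b c a y \<and> 0 \<le> coord c a b y"
    using coord_unique3[OF nc] by metis
next
  assume "0 \<le> coord a b c y \<and> 0 \<le> coord b c a y \<and> 0 \<le> coord c a b y"
  then show "y \<in> convex hull {a, b, c}"
    unfolding convex_hull_3 using coord_comb[OF nc, of y] by blast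
qed

lemma seg_coord:
  assumes nc: "\<not> collinear {a, b, c}" and y: "y \<in> closed_segment a b"
  shows "coord c a b y = 0" "0 \<le> coord a b c y" "0 \<le> coord b c a y"
proof -
  obtain u where u: "0 \<le> u" "u \<le> 1" "y = (1 - u) *\<^sub>R a + u *\<^sub>R b" using y in_segment(1) by blast
  have "y = (1 - u) *\<^sub>R a + u *\<^sub>R b + 0 *\<^sub>R c" using u by simp
  from coord_unique3[OF nc _ this] u show "coord c a b y = 0" "0 \<le> coord a b c y" "0 \<le> coord b c a y"
    by simp_all
qed

lemma open_seg_coord:
  assumes nc: "\<not> collinear {a, b, c}" and y: "y \<in> open_segment a b"
  shows "coord c a b y = 0" "0 < coord a b c y" "0 < coord b c a y"
proof -
  obtain u where u: "0 < u" "u < 1" "y = (1 - u) *\<^sub>R a + u *\<^sub>R b" using y in_segment(2) by blast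
  have "y = (1 - u) *\<^sub>R a + u *\<^sub>R b + 0 *\<^sub>R c" using u by simp
  from coord_unique3[OF nc _ this] u show "coord c a b y = 0" "0 < coord a b c y" "0 < coord b c a y"
    by simp_all
qed

lemma coord_cont: "isCont (coord a b c) y"
  unfolding coord_def[abs_def] cross_def divide_inverse by (intro continuous_intros)

lemma coord_tendsto: "(f \<longlongrightarrow> l) F \<Longrightarrow> ((\<lambda>x. coord a b c (f x)) \<longlongrightarrow> coord a b c l) F"
  by (rule isCont_tendsto_compose[OF coord_cont])



lemma norm2_vec: "(norm (v::real^2))^2 = v$1^2 + v$2^2"
  by (simp only: power2_norm_eq_inner) (simp add: inner_vec_def sum_2 power2_eq_square)

lemma inner2: "(u::real^2) \<bullet> v = u$1 * v$1 + u$2 * v$2"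
  by (simp add: inner_vec_def sum_2)

lemma nc_distinct:
  assumes "\<not> collinear {a, b, c}" shows "a \<noteq> b" "b \<noteq> c" "a \<noteq> c"
  using assms by (auto simp: collinear_2 insert_commute)

lemma vertices_tri:
  assumes "\<not> collinear {a, b, c}" shows "vertices (convex hull {a, b, c}) = {a, b, c}"
proof -
  have "\<not> affine_dependent {a, b, c}" using assms collinear_3_eq_affine_dependent by blast
  then show ?thesis unfolding vertices_def
    using extreme_point_of_convex_hull_affine_independent by blast
qed

lemma edges_tri:
  assumes "\<not> collinear {a, b, c}"
  shows "edges (convex hull {a, b, c}) = {closed_segment a b, closed_segment b c, closed_segment c a}"
  using nc_distinct[OF assms]
  unfolding edges_def vertices_tri[OF assms]
  by (auto simp: closed_segment_commute)

lemma endpoints_seg: "endpoints (closed_segment a b) = {a, b}"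
  unfolding endpoints_def extreme_point_of_segment by auto

lemma seg_length_seg: "seg_length (closed_segment a b) = dist a b"
proof -
  have "diameter (closed_segment a b) \<le> dist a b"
  proof (rule diameter_le)
    show "closed_segment a b \<noteq> {} \<or> 0 \<le> dist a b" by simp
    fix x y assume x: "x \<in> closed_segment a b" and y: "y \<in> closed_segment a b"
    have "norm (x - y) \<le> norm (x - a) \<or> norm (x - y) \<le> norm (x - b)"
      using segment_furthest_le[OF y, of x] .
    moreover have "norm (x - a) \<le> norm (b - a)" "norm (x - b) \<le> norm (b - a)" using segment_bound[OF x] by auto
    ultimately show "norm (x - y) \<le> dist a b" by (auto simp: dist_norm norm_minus_commute)
  qed
  moreover have "dist a b \<le> diameter (closed_segment a b)"
    by (rule diameter_bounded_bound) (auto intro: compact_imp_bounded)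
  ultimately show ?thesis unfolding seg_length_def by simp
qed

lemma seg_eq:
  fixes a b p q :: "real^2"
  assumes "a \<noteq> b" "closed_segment a b = closed_segment p q"
  shows "(p = a \<and> q = b) \<or> (p = b \<and> q = a)"
proof -
  have "{a, b} = {p, q}" using endpoints_seg[of a b] endpoints_seg[of p q] assms(2) by simp
  then show ?thesis using assms(1) by (auto simp: doubleton_eq_iff)
qed

lemma tri_edge:
  assumes "is_triangle T" "\<sigma> \<in> edges T"
  shows "\<exists>a b c. \<not> collinear {a, b, c} \<and> T = convex hull {a, b, c} \<and> \<sigma> = closed_segment a b"
proof -
  obtain p q r where nc: "\<not> collinear {p, q, r}" and T: "T = convex hull {p, q, r}"
    using assms(1) unfolding is_triangle_def by blast
  obtain x y where xy: "x \<in> {p, q, r}" "y \<in> {p, q, r}" "x \<noteq> y" "\<sigma> = closed_segment x y"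
    using assms(2) unfolding edges_def T vertices_tri[OF nc] by blast
  obtain z where z: "{x, y, z} = {p, q, r}"
    using xy(1-3) nc_distinct[OF nc] by (auto simp: insert_commute)
  show ?thesis
    by (rule exI[of _ x], rule exI[of _ y], rule exI[of _ z]) (use nc T xy z in auto)
qed

lemma cross_scaleR: "cross (k *\<^sub>R v) w = k * cross v w"
  by (simp add: cross_def algebra_simps)

definition perp :: "real^2 \<Rightarrow> real^2" where
  "perp v = (\<chi> i. if i = 1 then v$2 else - v$1)"

lemma perp_comp [simp]: "perp v $ 1 = v$2" "perp v $ 2 = - v$1"
  by (simp_all add: perp_def)

definition outn :: "real^2 \<Rightarrow> real^2 \<Rightarrow> real^2 \<Rightarrow> real^2" where
  "outn a b c = ((if cross (b - a) (c - a) > 0 then 1 else -1) / norm (b - a)) *\<^sub>R perp (b - a)"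

lemma norm_perp: "norm (perp v) = norm v"
proof -
  have "(norm (perp v))^2 = (norm v)^2" unfolding norm2_vec by simp
  then show ?thesis by simp
qed

lemma outn_unit: "a \<noteq> b \<Longrightarrow> norm (outn a b c) = 1"
  by (simp add: outn_def norm_perp)

lemma outn_swap:
  assumes "\<not> collinear {a, b, c}" shows "outn b a c = outn a b c"
proof -
  have D: "cross (b - a) (c - a) \<noteq> 0" using noncoll_cross[OF assms] .
  have e: "cross (a - b) (c - b) = - cross (b - a) (c - a)" by (simp add: cross_def algebra_simps)
  have p: "perp (a - b) = - perp (b - a)" by (simp add: vec2_eq)
  show ?thesis unfolding outn_def e p using D by (auto simp: norm_minus_commute)
qed

lemma outn_opp:
  assumes "cross (b - a) (c - a) * cross (b - a) (d - a) < 0"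
  shows "outn a b d = - outn a b c"
  using assms unfolding outn_def by (auto simp: mult_less_0_iff)

lemma outn_same:
  assumes "cross (b - a) (c - a) * cross (b - a) (d - a) > 0"
  shows "outn a b d = outn a b c"
  using assms unfolding outn_def by (auto simp: zero_less_mult_iff)

lemma perp_orth: "perp v \<bullet> v = 0"
  by (simp add: inner2 algebra_simps)

lemma outn_orth:
  assumes "x \<in> closed_segment a b" "y \<in> closed_segment a b"
  shows "outn a b c \<bullet> (x - y) = 0"
proof -
  obtain u where u: "x = (1 - u) *\<^sub>R a + u *\<^sub>R b" using assms(1) in_segment(1) by blast
  obtain v where v: "y = (1 - v) *\<^sub>R a + v *\<^sub>R b" using assms(2) in_segment(1) by blast
  have "x - y = (u - v) *\<^sub>R (b - a)" unfolding u v by (simp add: algebra_simps)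
  then show ?thesis unfolding outn_def by (simp add: perp_orth)
qed

lemma unit_perp_real:
  fixes n1 n2 b1 b2 :: real
  assumes "n1 * b1 + n2 * b2 = 0" "b1^2 + b2^2 \<noteq> 0"
  shows "n1 = (n1 * b2 - n2 * b1) / (b1^2 + b2^2) * b2" "n2 = - ((n1 * b2 - n2 * b1) / (b1^2 + b2^2) * b1)"
proof -
  have "n1 * (b1^2 + b2^2) = (n1 * b2 - n2 * b1) * b2" using assms(1) by algebra
  then show "n1 = (n1 * b2 - n2 * b1) / (b1^2 + b2^2) * b2" using assms(2) by (simp add: field_simps)
  have "n2 * (b1^2 + b2^2) = - ((n1 * b2 - n2 * b1) * b1)" using assms(1) by algebra
  then show "n2 = - ((n1 * b2 - n2 * b1) / (b1^2 + b2^2) * b1)" using assms(2) by (simp add: field_simps)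
qed

lemma unit_perp:
  assumes ab: "a \<noteq> b" and n: "norm n = 1" and o: "n \<bullet> (b - a) = 0"
  shows "n = outn a b c \<or> n = - outn a b c"
proof -
  define B where "B = b - a"
  have B0: "B \<noteq> 0" using ab by (simp add: B_def)
  have NB: "(norm B)^2 = B$1^2 + B$2^2" by (rule norm2_vec)
  have "B$1 \<noteq> 0 \<or> B$2 \<noteq> 0" using B0 by (auto simp: vec2_eq)
  then have nz: "B$1^2 + B$2^2 \<noteq> 0" by (auto simp: add_nonneg_eq_0_iff)
  define k where "k = (n$1 * B$2 - n$2 * B$1) / (B$1^2 + B$2^2)"
  have o': "n$1 * B$1 + n$2 * B$2 = 0" using o by (simp add: inner2 B_def)
  have nk: "n = k *\<^sub>R perp B"
    unfolding vec2_eq k_def using unit_perp_real[OF o' nz] by simp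
  have "1 = \<bar>k\<bar> * norm B" using n nk by (simp add: norm_perp)
  then have "k = 1 / norm B \<or> k = - 1 / norm B" using B0 by (auto simp: abs_if field_simps split: if_splits)
  then show ?thesis unfolding nk outn_def B_def by auto
qed

lemma coord_shift:
  assumes nc: "\<not> collinear {a, b, c}"
  shows "coord c a b (y + t *\<^sub>R outn a b c) = coord c a b y - t * (norm (b - a) / \<bar>cross (b - a) (c - a)\<bar>)"
proof -
  define D where "D = cross (b - a) (c - a)"
  have D: "D \<noteq> 0" using noncoll_cross[OF nc] by (simp add: D_def)
  define n where "n = outn a b c"
  have e1: "cross (a - c) (b - c) = D" by (simp add: D_def cross_def algebra_simps)
  have e2: "cross (a - (y + t *\<^sub>R n)) (b - (y + t *\<^sub>R n)) = cross (a - y) (b - y) - t * cross n (b - a)"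
    by (simp add: cross_def algebra_simps)
  have ab: "a \<noteq> b" using nc_distinct[OF nc] by simp
  have NB: "(norm (b - a))^2 = (b - a)$1^2 + (b - a)$2^2" by (rule norm2_vec)
  have cp: "cross (perp (b - a)) (b - a) = (norm (b - a))^2"
    unfolding NB by (simp add: cross_def power2_eq_square algebra_simps)
  have e3: "cross n (b - a) = (if D > 0 then 1 else -1) * norm (b - a)"
  proof -
    have "cross n (b - a) = ((if D > 0 then 1 else -1) / norm (b - a)) * cross (perp (b - a)) (b - a)"
      unfolding n_def outn_def D_def by (simp only: cross_scaleR)
    then show ?thesis using ab unfolding cp by (simp add: power2_eq_square)
  qed
  show ?thesis
    unfolding coord_def e1 e2 e3 n_def[symmetric] D_def[symmetric] using D
    by (auto simp: field_simps abs_if)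
qed



lemma coord_cont_on: "continuous_on UNIV (coord a b c)"
  by (simp add: continuous_at_imp_continuous_on coord_cont)

lemma open_pos: "open {y. 0 < coord a b c y}"
  using open_Collect_less[OF continuous_on_const coord_cont_on] by simp

definition Ucore where
  "Ucore a b c = {y. 0 < coord a b c y} \<inter> {y. 0 < coord b c a y} \<inter> {y. 0 < coord c a b y}"

lemma Ucore_interior:
  assumes nc: "\<not> collinear {a, b, c}"
  shows "Ucore a b c \<subseteq> interior (convex hull {a, b, c})"
proof (rule interior_maximal)
  show "Ucore a b c \<subseteq> convex hull {a, b, c}"
  proof
    fix y assume "y \<in> Ucore a b c"
    then have "0 < coord a b c y" "0 < coord b c a y" "0 < coord c a b y" by (simp_all add: Ucore_def)
    then show "y \<in> convex hull {a, b, c}" by (intro mem_hull[OF nc, THEN iffD2]) simp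
  qed
  show "open (Ucore a b c)" unfolding Ucore_def by (intro open_Int open_pos)
qed

lemma at_right_witness:
  assumes "eventually P (at_right (0::real))" "0 < e"
  shows "\<exists>t. 0 < t \<and> t < e \<and> P t"
proof -
  have "\<exists>b>0. \<forall>y>0. y < b \<longrightarrow> P y" using assms(1) unfolding eventually_at_right_field .
  then obtain b where b: "b > 0" "\<forall>y>0. y < b \<longrightarrow> P y" by blast
  define t where "t = min b e / 2"
  have t: "0 < t" "t < b" "t < e" using b(1) assms(2) unfolding t_def by (simp_all add: min_def)
  have "P t" using b(2) t(1,2) by blast
  then show ?thesis using t(1,3) by blast
qed

lemma inner_pts:
  assumes nc: "\<not> collinear {a, b, c}" and p: "p \<in> open_segment a b"
  shows "eventually (\<lambda>t. p - t *\<^sub>R outn a b c \<in> interior (convex hull {a, b, c})) (at_right 0)"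
proof -
  define n where "n = outn a b c"
  have lim: "((\<lambda>t. p - t *\<^sub>R n) \<longlongrightarrow> p) (at_right 0)"
  proof -
    have "((\<lambda>t. p - t *\<^sub>R n) \<longlongrightarrow> p - 0 *\<^sub>R n) (at_right 0)" by (intro tendsto_intros)
    then show ?thesis by simp
  qed
  have c1: "eventually (\<lambda>t. 0 < coord a b c (p - t *\<^sub>R n)) (at_right 0)"
    using order_tendstoD(1)[OF coord_tendsto[OF lim] open_seg_coord(2)[OF nc p]] .
  have c2: "eventually (\<lambda>t. 0 < coord b c a (p - t *\<^sub>R n)) (at_right 0)"
    using order_tendstoD(1)[OF coord_tendsto[OF lim] open_seg_coord(3)[OF nc p]] .
  have K: "0 < norm (b - a) / \<bar>cross (b - a) (c - a)\<bar>"
    using nc_distinct[OF nc] noncoll_cross[OF nc] by simp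
  have c3: "eventually (\<lambda>t. 0 < coord c a b (p - t *\<^sub>R n)) (at_right 0)"
  proof -
    define K where "K = norm (b - a) / \<bar>cross (b - a) (c - a)\<bar>"
    have K0: "0 < K" using K by (simp add: K_def)
    have ev: "eventually (\<lambda>t::real. 0 < t) (at_right 0)" by (simp add: eventually_at_right_field) (auto intro: exI[of _ 1])
    have eq: "coord c a b (p - t *\<^sub>R n) = t * K" for t
      using coord_shift[OF nc, of p "-t"] open_seg_coord(1)[OF nc p] by (simp add: n_def K_def)
    show ?thesis using ev by (rule eventually_mono) (simp add: eq K0)
  qed
  have "eventually (\<lambda>t. p - t *\<^sub>R n \<in> Ucore a b c) (at_right 0)"
    using c1 c2 c3 unfolding Ucore_def by eventually_elim auto
  then show ?thesis
  proof (rule eventually_mono)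
    fix t assume "p - t *\<^sub>R n \<in> Ucore a b c"
    then show "p - t *\<^sub>R outn a b c \<in> interior (convex hull {a, b, c})"
      using Ucore_interior[OF nc] unfolding n_def by blast
  qed
qed

lemma outer_pts:
  assumes nc: "\<not> collinear {a, b, c}" and p: "p \<in> closed_segment a b" and t: "0 < t"
  shows "p + t *\<^sub>R outn a b c \<notin> convex hull {a, b, c}"
proof
  assume "p + t *\<^sub>R outn a b c \<in> convex hull {a, b, c}"
  then have "0 \<le> coord c a b (p + t *\<^sub>R outn a b c)" using mem_hull[OF nc] by blast
  define K where "K = norm (b - a) / \<bar>cross (b - a) (c - a)\<bar>"
  have K0: "0 < K"
    using nc_distinct[OF nc] noncoll_cross[OF nc] by (simp add: K_def)
  have eq: "coord c a b (p + t *\<^sub>R outn a b c) = - (t * K)"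
    using coord_shift[OF nc, of p t] seg_coord(1)[OF nc p] by (simp add: K_def)
  have "0 < t * K" using K0 t by simp
  then show False using eq \<open>0 \<le> coord c a b (p + t *\<^sub>R outn a b c)\<close> by linarith
qed

lemma nbhd:
  assumes nc: "\<not> collinear {a, b, c}" and p: "p \<in> open_segment a b"
  shows "\<exists>S. open S \<and> p \<in> S \<and> (\<forall>y\<in>S. 0 \<le> coord c a b y \<longrightarrow> y \<in> convex hull {a, b, c})"
proof (intro exI conjI)
  let ?S = "{y. 0 < coord a b c y} \<inter> {y. 0 < coord b c a y}"
  show "open ?S" by (intro open_Int open_pos)
  show "p \<in> ?S" using open_seg_coord[OF nc p] by simp
  show "\<forall>y\<in>?S. 0 \<le> coord c a b y \<longrightarrow> y \<in> convex hull {a, b, c}"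
  proof (intro ballI impI)
    fix y assume "y \<in> ?S" "0 \<le> coord c a b y"
    then show "y \<in> convex hull {a, b, c}" by (intro mem_hull[OF nc, THEN iffD2]) simp
  qed
qed

lemma mid_sum: "a \<noteq> b \<Longrightarrow> (1/2) *\<^sub>R (\<Sum>v\<in>endpoints (closed_segment a b). v) = (1/2) *\<^sub>R (a + b)"
  by (simp add: endpoints_seg)

lemma mid_open: "a \<noteq> b \<Longrightarrow> (1/2) *\<^sub>R (a + b) \<in> open_segment a b"
  unfolding in_segment(2) by (intro conjI exI[of _ "1/2"]) (auto simp: algebra_simps)

lemma ON:
  assumes nc: "\<not> collinear {a, b, c}" and sub: "convex hull {a, b, c} \<subseteq> Q"
    and loc: "\<exists>S. open S \<and> (1/2) *\<^sub>R (a + b) \<in> S \<and> (\<forall>y\<in>S. y \<in> Q \<longrightarrow> y \<in> convex hull {a, b, c})"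
  shows "outer_normal Q (closed_segment a b) = outn a b c"
proof -
  have ab: "a \<noteq> b" using nc_distinct[OF nc] by simp
  define m where "m = (1/2) *\<^sub>R (a + b)"
  have m: "m \<in> open_segment a b" using mid_open[OF ab] by (simp add: m_def)
  have mc: "m \<in> closed_segment a b" using m open_closed_segment by blast
  define n where "n = outn a b c"
  show ?thesis unfolding outer_normal_def mid_sum[OF ab] m_def[symmetric] n_def[symmetric]
  proof (rule the_equality)
    show "norm n = 1 \<and> (\<forall>x\<in>closed_segment a b. \<forall>y\<in>closed_segment a b. n \<bullet> (x - y) = 0) \<and>
      (\<exists>\<epsilon>>0. \<forall>t. 0 < t \<and> t < \<epsilon> \<longrightarrow> m + t *\<^sub>R n \<notin> Q)"
    proof (intro conjI)
      show "norm n = 1" using outn_unit[OF ab] by (simp add: n_def)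
      show "\<forall>x\<in>closed_segment a b. \<forall>y\<in>closed_segment a b. n \<bullet> (x - y) = 0"
        using outn_orth unfolding n_def by blast
      obtain S where S: "open S" "m \<in> S" "\<forall>y\<in>S. y \<in> Q \<longrightarrow> y \<in> convex hull {a, b, c}"
        using loc by (auto simp: m_def)
      obtain e where e: "e > 0" "ball m e \<subseteq> S" using S(1,2) open_contains_ball by blast
      show "\<exists>\<epsilon>>0. \<forall>t. 0 < t \<and> t < \<epsilon> \<longrightarrow> m + t *\<^sub>R n \<notin> Q"
      proof (intro exI[of _ e] conjI allI impI e(1))
        fix t assume t: "0 < t \<and> t < e"
        have "m + t *\<^sub>R n \<in> ball m e" using t outn_unit[OF ab] by (simp add: n_def dist_norm)
        then have "m + t *\<^sub>R n \<in> S" using e by blast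
        then show "m + t *\<^sub>R n \<notin> Q" using S(3) outer_pts[OF nc mc, of t] t by (auto simp: n_def)
      qed
    qed
  next
    fix n' assume h: "norm n' = 1 \<and> (\<forall>x\<in>closed_segment a b. \<forall>y\<in>closed_segment a b. n' \<bullet> (x - y) = 0) \<and>
      (\<exists>\<epsilon>>0. \<forall>t. 0 < t \<and> t < \<epsilon> \<longrightarrow> m + t *\<^sub>R n' \<notin> Q)"
    have o: "n' \<bullet> (b - a) = 0" using h ends_in_segment by blast
    have u: "norm n' = 1" using h by blast
    have "n' = n \<or> n' = - n" using unit_perp[OF ab u o, of c] unfolding n_def .
    moreover have "n' \<noteq> - n"
    proof
      assume nn: "n' = - n"
      obtain e where e: "e > 0" "\<forall>t. 0 < t \<and> t < e \<longrightarrow> m + t *\<^sub>R n' \<notin> Q" using h by blast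
      obtain t where t: "0 < t" "t < e" "m - t *\<^sub>R n \<in> interior (convex hull {a, b, c})"
        using at_right_witness[OF inner_pts[OF nc m] e(1)] by (auto simp: n_def)
      have "m - t *\<^sub>R n \<in> Q" using t(3) interior_subset sub by blast
      moreover have "m + t *\<^sub>R n' \<notin> Q" using e(2) t by blast
      moreover have "m + t *\<^sub>R n' = m - t *\<^sub>R n" using nn by simp
      ultimately show False by simp
    qed
    ultimately show "n' = n" by blast
  qed
qed



lemma tri_closed: "is_triangle T \<Longrightarrow> closed T"
proof -
  assume "is_triangle T"
  then obtain a b c where "T = convex hull {a, b, c}" unfolding is_triangle_def by blast
  moreover have "compact (convex hull {a, b, c})" by (rule compact_convex_hull) simp
  ultimately show "closed T" by (simp add: compact_imp_closed)
qed

lemma ct_facts: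
  assumes "conforming_triangulation M Q"
  shows "finite M" "\<And>T. T \<in> M \<Longrightarrow> is_triangle T" "\<Union>M = Q"
    "\<And>T1 T2. T1 \<in> M \<Longrightarrow> T2 \<in> M \<Longrightarrow> T1 \<noteq> T2 \<Longrightarrow> interior T1 \<inter> interior T2 = {}"
    "\<And>T1 T2. T1 \<in> M \<Longrightarrow> T2 \<in> M \<Longrightarrow> T1 \<noteq> T2 \<Longrightarrow>
        T1 \<inter> T2 = {} \<or>
        (\<exists>v. v \<in> vertices T1 \<and> v \<in> vertices T2 \<and> T1 \<inter> T2 = {v}) \<or>
        (\<exists>e. e \<in> edges T1 \<and> e \<in> edges T2 \<and> T1 \<inter> T2 = e)"
proof -
  note d = assms[unfolded conforming_triangulation_def]
  note d1 = conjunct1[OF d] and d2 = conjunct1[OF conjunct2[OF d]]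
   and d3 = conjunct1[OF conjunct2[OF conjunct2[OF d]]]
   and d4 = conjunct1[OF conjunct2[OF conjunct2[OF conjunct2[OF d]]]]
   and d5 = conjunct2[OF conjunct2[OF conjunct2[OF conjunct2[OF d]]]]
  show "finite M" by (rule d1)
  show "\<And>T. T \<in> M \<Longrightarrow> is_triangle T" using d2 by (rule bspec)
  show "\<Union>M = Q" by (rule d3)
  show "\<And>T1 T2. T1 \<in> M \<Longrightarrow> T2 \<in> M \<Longrightarrow> T1 \<noteq> T2 \<Longrightarrow> interior T1 \<inter> interior T2 = {}"
    by (rule mp[OF bspec[OF bspec[OF d4]]])
  show "\<And>T1 T2. T1 \<in> M \<Longrightarrow> T2 \<in> M \<Longrightarrow> T1 \<noteq> T2 \<Longrightarrow>
        T1 \<inter> T2 = {} \<or>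
        (\<exists>v. v \<in> vertices T1 \<and> v \<in> vertices T2 \<and> T1 \<inter> T2 = {v}) \<or>
        (\<exists>e. e \<in> edges T1 \<and> e \<in> edges T2 \<and> T1 \<inter> T2 = e)"
    by (rule mp[OF bspec[OF bspec[OF d5]]])
qed

lemma edge_other:
  assumes ct: "conforming_triangulation M Q"
    and T0: "convex hull {a, b, c} \<in> M" and nc: "\<not> collinear {a, b, c}"
    and T': "T' \<in> M" "T' \<noteq> convex hull {a, b, c}"
    and p: "p \<in> open_segment a b" "p \<in> T'"
  shows "closed_segment a b \<in> edges T'"
proof -
  have c1: "coord c a b p = 0" "0 < coord a b c p" "0 < coord b c a p" using open_seg_coord[OF nc p(1)] by auto
  have pT0: "p \<in> convex hull {a, b, c}"
    using p(1) open_closed_segment segments_subset_convex_hull(1) by blast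
  have cases: "convex hull {a, b, c} \<inter> T' = {} \<or>
        (\<exists>v. v \<in> vertices (convex hull {a, b, c}) \<and> v \<in> vertices T' \<and> convex hull {a, b, c} \<inter> T' = {v}) \<or>
        (\<exists>e. e \<in> edges (convex hull {a, b, c}) \<and> e \<in> edges T' \<and> convex hull {a, b, c} \<inter> T' = e)"
    using ct_facts(5)[OF ct T0 T'(1)] T'(2) by metis
  show ?thesis
  proof (cases "convex hull {a, b, c} \<inter> T' = {}")
    case True then show ?thesis using pT0 p(2) by blast
  next
    case F1: False
    show ?thesis
    proof (cases "\<exists>v. v \<in> vertices (convex hull {a, b, c}) \<and> v \<in> vertices T' \<and> convex hull {a, b, c} \<inter> T' = {v}")
      case True
      then obtain v where v: "v \<in> {a, b, c}" "convex hull {a, b, c} \<inter> T' = {v}"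
        using vertices_tri[OF nc] by blast
      then have "p = v" using pT0 p(2) by blast
      then have "p = a \<or> p = b \<or> p = c" using v(1) by blast
      then show ?thesis using c1 coord_vertices[OF nc] by auto
    next
      case False
      then obtain e where e: "e \<in> edges (convex hull {a, b, c})" "e \<in> edges T'" "convex hull {a, b, c} \<inter> T' = e"
        using cases F1 by blast
      have pe: "p \<in> e" using e(3) pT0 p(2) by blast
      have "e = closed_segment a b \<or> e = closed_segment b c \<or> e = closed_segment c a"
        using e(1) edges_tri[OF nc] by blast
      moreover have "e \<noteq> closed_segment b c"
      proof
        assume "e = closed_segment b c"
        then have "coord a b c p = 0" using seg_coord(1)[OF nc_perm(1)[OF nc], of p] pe by simp
        then show False using c1 by simp
      qed
      moreover have "e \<noteq> closed_segment c a"
      proof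
        assume "e = closed_segment c a"
        then have "coord b c a p = 0" using seg_coord(1)[OF nc_perm(2)[OF nc], of p] pe by simp
        then show False using c1 by simp
      qed
      ultimately show ?thesis using e(2) by blast
    qed
  qed
qed

lemma noshare:
  assumes ct: "conforming_triangulation M Q"
    and T0: "convex hull {a, b, c} \<in> M" and nc: "\<not> collinear {a, b, c}"
    and no: "\<forall>T\<in>M. T \<noteq> convex hull {a, b, c} \<longrightarrow> closed_segment a b \<notin> edges T"
    and p: "p \<in> open_segment a b"
  shows "\<exists>S. open S \<and> p \<in> S \<and> (\<forall>y\<in>S. y \<in> Q \<longrightarrow> y \<in> convex hull {a, b, c})"
proof -
  let ?A = "M - {convex hull {a, b, c}}"
  let ?S = "\<Inter>T\<in>?A. - T"
  have "open ?S"
    using ct_facts(1)[OF ct] ct_facts(2)[OF ct] tri_closed by (intro open_INT) auto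
  moreover have "p \<in> ?S"
  proof
    fix T assume T: "T \<in> ?A"
    show "p \<in> - T"
    proof
      assume "p \<in> T"
      then have "closed_segment a b \<in> edges T" using edge_other[OF ct T0 nc, of T p] T p by blast
      then show False using no T by blast
    qed
  qed
  moreover have "\<forall>y\<in>?S. y \<in> Q \<longrightarrow> y \<in> convex hull {a, b, c}"
    using ct_facts(3)[OF ct] by blast
  ultimately show ?thesis by blast
qed

lemma sign_split:
  fixes X Dc Dd :: real
  assumes "Dc * Dd < 0" shows "0 \<le> X / Dc \<or> 0 \<le> X / Dd"
  using assms by (cases "0 \<le> X") (auto simp: mult_less_0_iff zero_le_divide_iff)

lemma opposite:
  assumes ct: "conforming_triangulation M Q"
    and T0: "convex hull {a, b, c} \<in> M" and nc: "\<not> collinear {a, b, c}"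
    and T1: "convex hull {a, b, d} \<in> M" and nd: "\<not> collinear {a, b, d}"
    and ne: "convex hull {a, b, d} \<noteq> convex hull {a, b, c}"
  shows "cross (b - a) (c - a) * cross (b - a) (d - a) < 0"
proof (rule ccontr)
  assume "\<not> ?thesis"
  moreover have "cross (b - a) (c - a) \<noteq> 0" "cross (b - a) (d - a) \<noteq> 0"
    using noncoll_cross[OF nc] noncoll_cross[OF nd] by auto
  ultimately have "cross (b - a) (c - a) * cross (b - a) (d - a) > 0"
    by (metis linorder_neqE_linordered_idom mult_eq_0_iff not_le order_le_less)
  then have eqn: "outn a b d = outn a b c" by (rule outn_same)
  have ab: "a \<noteq> b" using nc_distinct[OF nc] by simp
  have m: "(1/2) *\<^sub>R (a + b) \<in> open_segment a b" by (rule mid_open[OF ab])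
  have "eventually (\<lambda>t. (1/2) *\<^sub>R (a + b) - t *\<^sub>R outn a b c \<in> interior (convex hull {a, b, c}) \<and>
       (1/2) *\<^sub>R (a + b) - t *\<^sub>R outn a b c \<in> interior (convex hull {a, b, d})) (at_right 0)"
    using inner_pts[OF nc m] inner_pts[OF nd m] unfolding eqn by (rule eventually_conj)
  then obtain t where "(1/2) *\<^sub>R (a + b) - t *\<^sub>R outn a b c \<in> interior (convex hull {a, b, c}) \<inter> interior (convex hull {a, b, d})"
    using at_right_witness[of _ 1] by fastforce
  moreover have "interior (convex hull {a, b, c}) \<inter> interior (convex hull {a, b, d}) = {}"
    using ct_facts(4)[OF ct T0 T1] ne by blast
  ultimately show False by blast
qed

lemma share_interior:
  assumes ct: "conforming_triangulation M Q"
    and T0: "convex hull {a, b, c} \<in> M" and nc: "\<not> collinear {a, b, c}"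
    and T1: "convex hull {a, b, d} \<in> M" and nd: "\<not> collinear {a, b, d}"
    and ne: "convex hull {a, b, d} \<noteq> convex hull {a, b, c}"
    and p: "p \<in> open_segment a b"
  shows "p \<in> interior Q"
proof -
  have neg: "cross (b - a) (c - a) * cross (b - a) (d - a) < 0" by (rule opposite[OF ct T0 nc T1 nd ne])
  obtain S1 where S1: "open S1" "p \<in> S1" "\<forall>y\<in>S1. 0 \<le> coord c a b y \<longrightarrow> y \<in> convex hull {a, b, c}"
    using nbhd[OF nc p] by blast
  obtain S2 where S2: "open S2" "p \<in> S2" "\<forall>y\<in>S2. 0 \<le> coord d a b y \<longrightarrow> y \<in> convex hull {a, b, d}"
    using nbhd[OF nd p] by blast
  have sub: "S1 \<inter> S2 \<subseteq> Q"
  proof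
    fix y assume y: "y \<in> S1 \<inter> S2"
    have ec: "coord c a b y = cross (a - y) (b - y) / cross (b - a) (c - a)"
      unfolding coord_def by (simp add: cross_def algebra_simps)
    have ed: "coord d a b y = cross (a - y) (b - y) / cross (b - a) (d - a)"
      unfolding coord_def by (simp add: cross_def algebra_simps)
    have "0 \<le> coord c a b y \<or> 0 \<le> coord d a b y" unfolding ec ed by (rule sign_split[OF neg])
    then have "y \<in> convex hull {a, b, c} \<or> y \<in> convex hull {a, b, d}" using y S1(3) S2(3) by blast
    then show "y \<in> Q" using ct_facts(3)[OF ct] T0 T1 by blast
  qed
  show ?thesis by (rule interiorI[OF open_Int[OF S1(1) S2(1)] _ sub]) (use S1 S2 in blast)
qed



definition ccenter :: "real^2 \<Rightarrow> real^2 \<Rightarrow> real^2 \<Rightarrow> real^2" where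
  "ccenter a b c = a + (1 / (2 * cross (b - a) (c - a))) *\<^sub>R
     (\<chi> i. if i = 1 then ((b$1 - a$1)^2 + (b$2 - a$2)^2) * (c$2 - a$2) - ((c$1 - a$1)^2 + (c$2 - a$2)^2) * (b$2 - a$2)
           else (b$1 - a$1) * ((c$1 - a$1)^2 + (c$2 - a$2)^2) - (c$1 - a$1) * ((b$1 - a$1)^2 + (b$2 - a$2)^2))"

lemma div_comb:
  fixes p q x y n d :: real
  assumes "d \<noteq> 0" "p * x + q * y = n * d"
  shows "p / d * x + q / d * y = n"
proof -
  have "p / d * x + q / d * y = (p * x + q * y) / d" by (simp add: add_divide_distrib)
  then show ?thesis using assms by simp
qed

lemma cc_real:
  fixes bx bz cx cz :: real
  assumes D: "bx * cz - bz * cx \<noteq> 0"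
  shows "2 * ((bx^2 + bz^2) * cz - (cx^2 + cz^2) * bz) / (2 * (bx * cz - bz * cx)) * bx
       + 2 * (bx * (cx^2 + cz^2) - cx * (bx^2 + bz^2)) / (2 * (bx * cz - bz * cx)) * bz = bx^2 + bz^2"
    "2 * ((bx^2 + bz^2) * cz - (cx^2 + cz^2) * bz) / (2 * (bx * cz - bz * cx)) * cx
       + 2 * (bx * (cx^2 + cz^2) - cx * (bx^2 + bz^2)) / (2 * (bx * cz - bz * cx)) * cz = cx^2 + cz^2"
proof -
  have D2: "2 * (bx * cz - bz * cx) \<noteq> 0" using D by simp
  have "2 * ((bx^2 + bz^2) * cz - (cx^2 + cz^2) * bz) * bx + 2 * (bx * (cx^2 + cz^2) - cx * (bx^2 + bz^2)) * bz
      = (bx^2 + bz^2) * (2 * (bx * cz - bz * cx))" by algebra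
  from div_comb[OF D2 this] show "2 * ((bx^2 + bz^2) * cz - (cx^2 + cz^2) * bz) / (2 * (bx * cz - bz * cx)) * bx
       + 2 * (bx * (cx^2 + cz^2) - cx * (bx^2 + bz^2)) / (2 * (bx * cz - bz * cx)) * bz = bx^2 + bz^2" .
  have "2 * ((bx^2 + bz^2) * cz - (cx^2 + cz^2) * bz) * cx + 2 * (bx * (cx^2 + cz^2) - cx * (bx^2 + bz^2)) * cz
      = (cx^2 + cz^2) * (2 * (bx * cz - bz * cx))" by algebra
  from div_comb[OF D2 this] show "2 * ((bx^2 + bz^2) * cz - (cx^2 + cz^2) * bz) / (2 * (bx * cz - bz * cx)) * cx
       + 2 * (bx * (cx^2 + cz^2) - cx * (bx^2 + bz^2)) / (2 * (bx * cz - bz * cx)) * cz = cx^2 + cz^2" .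
qed

lemma half_comb:
  fixes w1 w2 x y n D p q :: real
  assumes "D \<noteq> 0" "w1 * x + w2 * y = n * D"
  shows "2 * ((p + w1 / (2 * D) - p) * x + (q + w2 / (2 * D) - q) * y) = n"
proof -
  have "2 * ((p + w1 / (2 * D) - p) * x + (q + w2 / (2 * D) - q) * y) = (w1 * x + w2 * y) / D"
    using assms(1) by (simp add: field_simps)
  then show ?thesis using assms by simp
qed

lemma lin_unique_real:
  fixes bx bz cx cz u v k l :: real
  assumes D: "bx * cz - bz * cx \<noteq> 0" and e1: "u * bx + v * bz = k" and e2: "u * cx + v * cz = l"
  shows "u = (k * cz - l * bz) / (bx * cz - bz * cx)" "v = (bx * l - cx * k) / (bx * cz - bz * cx)"
proof -
  have "u * (bx * cz - bz * cx) = k * cz - l * bz" unfolding e1[symmetric] e2[symmetric] by (simp add: algebra_simps)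
  then show "u = (k * cz - l * bz) / (bx * cz - bz * cx)" using D by (simp add: field_simps)
  have "v * (bx * cz - bz * cx) = bx * l - cx * k" unfolding e1[symmetric] e2[symmetric] by (simp add: algebra_simps)
  then show "v = (bx * l - cx * k) / (bx * cz - bz * cx)" using D by (simp add: field_simps)
qed

lemma dist2: "(dist (u::real^2) v)^2 = (u$1 - v$1)^2 + (u$2 - v$2)^2"
  unfolding dist_norm norm2_vec by simp

lemma circ:
  assumes nc: "\<not> collinear {a, b, c}"
  shows "circumcenter (convex hull {a, b, c}) = ccenter a b c"
proof -
  define D where "D = cross (b - a) (c - a)"
  have D0: "D \<noteq> 0" using noncoll_cross[OF nc] by (simp add: D_def)
  have D': "(b$1 - a$1) * (c$2 - a$2) - (b$2 - a$2) * (c$1 - a$1) \<noteq> 0" using D0 by (simp add: D_def cross_def)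
  define CC where "CC = ccenter a b c"
  define w1 where "w1 = ((b$1 - a$1)^2 + (b$2 - a$2)^2) * (c$2 - a$2) - ((c$1 - a$1)^2 + (c$2 - a$2)^2) * (b$2 - a$2)"
  define w2 where "w2 = (b$1 - a$1) * ((c$1 - a$1)^2 + (c$2 - a$2)^2) - (c$1 - a$1) * ((b$1 - a$1)^2 + (b$2 - a$2)^2)"
  have CC1: "CC$1 = a$1 + w1 / (2 * D)" and CC2: "CC$2 = a$2 + w2 / (2 * D)"
    by (simp_all add: CC_def ccenter_def w1_def w2_def D_def)
  have key: "(dist z b)^2 = (dist z a)^2 \<longleftrightarrow> 2 * ((z$1 - a$1) * (b$1 - a$1) + (z$2 - a$2) * (b$2 - a$2)) = (b$1 - a$1)^2 + (b$2 - a$2)^2"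
    for z b :: "real^2"
    unfolding dist2 by (simp add: power2_eq_square algebra_simps) (rule eq_commute)
  have Cb: "(dist CC b)^2 = (dist CC a)^2"
  proof -
    have "w1 * (b$1 - a$1) + w2 * (b$2 - a$2) = ((b$1 - a$1)^2 + (b$2 - a$2)^2) * D"
      unfolding w1_def w2_def D_def cross_def vector_minus_component by algebra
    then show ?thesis unfolding key CC1 CC2 by (rule half_comb[OF D0])
  qed
  have Cc: "(dist CC c)^2 = (dist CC a)^2"
  proof -
    have "w1 * (c$1 - a$1) + w2 * (c$2 - a$2) = ((c$1 - a$1)^2 + (c$2 - a$2)^2) * D"
      unfolding w1_def w2_def D_def cross_def vector_minus_component by algebra
    then show ?thesis unfolding key CC1 CC2 by (rule half_comb[OF D0])
  qed
  have Cb': "dist CC b = dist CC a" using Cb by (simp add: power2_eq_iff_nonneg)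
  have Cc': "dist CC c = dist CC a" using Cc by (simp add: power2_eq_iff_nonneg)
  show ?thesis unfolding circumcenter_def vertices_tri[OF nc] CC_def[symmetric]
  proof (rule the_equality)
    show "\<exists>r. \<forall>v\<in>{a, b, c}. dist CC v = r" using Cb' Cc' by (intro exI[of _ "dist CC a"]) auto
  next
    fix z assume "\<exists>r. \<forall>v\<in>{a, b, c}. dist z v = r"
    then obtain r where r: "dist z a = r" "dist z b = r" "dist z c = r" by auto
    have e1: "2 * ((z$1 - a$1) * (b$1 - a$1) + (z$2 - a$2) * (b$2 - a$2)) = (b$1 - a$1)^2 + (b$2 - a$2)^2"
      using key[of z b] r by simp
    have e2: "2 * ((z$1 - a$1) * (c$1 - a$1) + (z$2 - a$2) * (c$2 - a$2)) = (c$1 - a$1)^2 + (c$2 - a$2)^2"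
      using key[of z c] r by simp
    have e1': "(2 * (z$1 - a$1)) * (b$1 - a$1) + (2 * (z$2 - a$2)) * (b$2 - a$2) = (b$1 - a$1)^2 + (b$2 - a$2)^2"
      using e1 by (simp add: algebra_simps)
    have e2': "(2 * (z$1 - a$1)) * (c$1 - a$1) + (2 * (z$2 - a$2)) * (c$2 - a$2) = (c$1 - a$1)^2 + (c$2 - a$2)^2"
      using e2 by (simp add: algebra_simps)
    note L = lin_unique_real[OF D' e1' e2']
    have z1: "z$1 = a$1 + w1 / (2 * D)"
    proof -
      have "2 * (z$1 - a$1) = w1 / D" using L(1) by (simp add: w1_def D_def cross_def)
      then show ?thesis using D0 by (simp add: field_simps)
    qed
    have z2: "z$2 = a$2 + w2 / (2 * D)"
    proof -
      have "2 * (z$2 - a$2) = w2 / D" using L(2) by (simp add: w2_def D_def cross_def)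
      then show ?thesis using D0 by (simp add: field_simps)
    qed
    show "z = CC" unfolding vec2_eq CC1 CC2 z1 z2 by simp
  qed
qed



lemma pt1: fixes xa ya xb yb xc yc xq yq :: real
  shows "2 * ((xb - xa) * (yc - ya) - (yb - ya) * (xc - xa)) * (xa - xq)
     + (((xb - xa)^2 + (yb - ya)^2) * (yc - ya) - ((xc - xa)^2 + (yc - ya)^2) * (yb - ya))
   = ((xa - xq)^2 + (ya - yq)^2 + (xb - xq)^2 + (yb - yq)^2) * (yb - ya)
   + ((xb - xq)^2 + (yb - yq)^2 + (xc - xq)^2 + (yc - yq)^2) * (yc - yb)
   + ((xc - xq)^2 + (yc - yq)^2 + (xa - xq)^2 + (ya - yq)^2) * (ya - yc)"
  by algebra

lemma pt2: fixes xa ya xb yb xc yc xq yq :: real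
  shows "2 * ((xb - xa) * (yc - ya) - (yb - ya) * (xc - xa)) * (ya - yq)
     + ((xb - xa) * ((xc - xa)^2 + (yc - ya)^2) - (xc - xa) * ((xb - xa)^2 + (yb - ya)^2))
   = ((xa - xq)^2 + (ya - yq)^2 + (xb - xq)^2 + (yb - yq)^2) * (- (xb - xa))
   + ((xb - xq)^2 + (yb - yq)^2 + (xc - xq)^2 + (yc - yq)^2) * (- (xc - xb))
   + ((xc - xq)^2 + (yc - yq)^2 + (xa - xq)^2 + (ya - yq)^2) * (- (xa - xc))"
  by algebra

lemma comp_lemma:
  fixes D a x w R :: real
  assumes "D \<noteq> 0" "2 * D * (a - x) + w = R"
  shows "\<bar>D\<bar> / 2 * (a + w / (2 * D) - x) = (if D > 0 then 1 else -1) * R / 4"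
proof -
  have "\<bar>D\<bar> / 2 * (a + w / (2 * D) - x) = (if D > 0 then 1 else -1) * (2 * D * (a - x) + w) / 4"
    using assms(1) by (auto simp: field_simps abs_if)
  then show ?thesis using assms(2) by simp
qed

lemma hterm:
  assumes "p \<noteq> q"
  shows "(dist p q * K / 4) *\<^sub>R outn p q r = ((if cross (q - p) (r - p) > 0 then 1 else -1) * K / 4) *\<^sub>R perp (q - p)"
proof -
  have N: "norm (q - p) \<noteq> 0" using assms by simp
  have "dist p q = norm (q - p)" by (simp add: dist_norm norm_minus_commute)
  then show ?thesis unfolding outn_def using N by (simp add: field_simps)
qed

lemma area_tri: "area (convex hull {a, b, c}) = \<bar>cross (b - a) (c - a)\<bar> / 2"
proof -
  have "area (convex hull {a, b, c}) = \<bar>(c $ 1 - a $ 1) * (b $ 2 - a $ 2) - (b $ 1 - a $ 1) * (c $ 2 - a $ 2)\<bar> / 2"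
  proof -
    have "closed (convex hull {a, b, c})"
      by (intro compact_imp_closed compact_convex_hull finite_imp_compact) simp
    then have "convex hull {a, b, c} \<in> sets lborel" by (simp add: borel_closed)
    then have "area (convex hull {a, b, c}) = measure lborel (convex hull {a, b, c})"
      unfolding area_def by simp
    then show ?thesis using content_triangle by simp
  qed
  also have "\<dots> = \<bar>cross (b - a) (c - a)\<bar> / 2"
    by (simp add: cross_def abs_minus_commute algebra_simps)
  finally show ?thesis .
qed

lemma edges_distinct:
  fixes a b c :: "real^2"
  assumes nc: "\<not> collinear {a, b, c}"
  shows "closed_segment a b \<noteq> closed_segment b c" "closed_segment b c \<noteq> closed_segment c a"
        "closed_segment a b \<noteq> closed_segment c a"
proof -
  have "a \<notin> closed_segment b c"
    using seg_coord(1)[OF nc_perm(1)[OF nc], of a] coord_vertices(1)[OF nc] by auto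
  then show "closed_segment a b \<noteq> closed_segment b c" by auto
  have "b \<notin> closed_segment c a"
    using seg_coord(1)[OF nc_perm(2)[OF nc], of b] coord_vertices(5)[OF nc] by auto
  then show "closed_segment b c \<noteq> closed_segment c a" "closed_segment a b \<noteq> closed_segment c a" by auto
qed

lemma ON_self:
  assumes nc: "\<not> collinear {a, b, c}"
  shows "outer_normal (convex hull {a, b, c}) (closed_segment a b) = outn a b c"
  by (rule ON[OF nc subset_refl]) auto

lemma edge_term:
  assumes nc: "\<not> collinear {a, b, c}"
  shows "(seg_length (closed_segment a b) * (\<Sum>v\<in>endpoints (closed_segment a b). (norm (v - x))\<^sup>2) / 4)
           *\<^sub>R outer_normal (convex hull {a, b, c}) (closed_segment a b)
       = ((if cross (b - a) (c - a) > 0 then 1 else -1) * ((norm (a - x))\<^sup>2 + (norm (b - x))\<^sup>2) / 4) *\<^sub>R perp (b - a)"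
proof -
  have ab: "a \<noteq> b" using nc_distinct[OF nc] by simp
  show ?thesis unfolding ON_self[OF nc] seg_length_seg endpoints_seg using ab
    by (simp add: hterm[OF ab])
qed

lemma PT:
  assumes nc: "\<not> collinear {a, b, c}"
  shows "area (convex hull {a, b, c}) *\<^sub>R (circumcenter (convex hull {a, b, c}) - x) =
    (\<Sum>\<sigma>\<in>edges (convex hull {a, b, c}).
        (seg_length \<sigma> * (\<Sum>v\<in>endpoints \<sigma>. (norm (v - x))\<^sup>2) / 4) *\<^sub>R outer_normal (convex hull {a, b, c}) \<sigma>)"
proof -
  define D where "D = cross (b - a) (c - a)"
  have D0: "D \<noteq> 0" using noncoll_cross[OF nc] by (simp add: D_def)
  define s :: real where "s = (if D > 0 then 1 else -1)"
  define f where "f \<sigma> = (seg_length \<sigma> * (\<Sum>v\<in>endpoints \<sigma>. (norm (v - x))\<^sup>2) / 4) *\<^sub>R outer_normal (convex hull {a, b, c}) \<sigma>" for \<sigma>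
  have Tb: "convex hull {a, b, c} = convex hull {b, c, a}" and Tc: "convex hull {a, b, c} = convex hull {c, a, b}"
    by (simp_all add: insert_commute)
  have eb: "cross (c - b) (a - b) = D" and ec: "cross (a - c) (b - c) = D"
    by (simp_all add: D_def cross_def algebra_simps)
  have f1: "f (closed_segment a b) = (s * ((norm (a - x))\<^sup>2 + (norm (b - x))\<^sup>2) / 4) *\<^sub>R perp (b - a)"
    unfolding f_def edge_term[OF nc] s_def D_def ..
  have f2: "f (closed_segment b c) = (s * ((norm (b - x))\<^sup>2 + (norm (c - x))\<^sup>2) / 4) *\<^sub>R perp (c - b)"
    unfolding f_def Tb edge_term[OF nc_perm(1)[OF nc]] s_def eb ..
  have f3: "f (closed_segment c a) = (s * ((norm (c - x))\<^sup>2 + (norm (a - x))\<^sup>2) / 4) *\<^sub>R perp (a - c)"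
    unfolding f_def Tc edge_term[OF nc_perm(2)[OF nc]] s_def ec ..
  have sum: "(\<Sum>\<sigma>\<in>edges (convex hull {a, b, c}). f \<sigma>) = f (closed_segment a b) + f (closed_segment b c) + f (closed_segment c a)"
    unfolding edges_tri[OF nc] using edges_distinct[OF nc] by (simp add: algebra_simps)
  define w1 where "w1 = ((b$1 - a$1)^2 + (b$2 - a$2)^2) * (c$2 - a$2) - ((c$1 - a$1)^2 + (c$2 - a$2)^2) * (b$2 - a$2)"
  define w2 where "w2 = (b$1 - a$1) * ((c$1 - a$1)^2 + (c$2 - a$2)^2) - (c$1 - a$1) * ((b$1 - a$1)^2 + (b$2 - a$2)^2)"
  have C1: "ccenter a b c $ 1 = a$1 + w1 / (2 * D)" and C2: "ccenter a b c $ 2 = a$2 + w2 / (2 * D)"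
    by (simp_all add: ccenter_def w1_def w2_def D_def)
  define na where "na = (norm (a - x))\<^sup>2"
  define nb where "nb = (norm (b - x))\<^sup>2"
  define nc' where "nc' = (norm (c - x))\<^sup>2"
  have na: "na = (a$1 - x$1)^2 + (a$2 - x$2)^2" unfolding na_def norm2_vec by simp
  have nb: "nb = (b$1 - x$1)^2 + (b$2 - x$2)^2" unfolding nb_def norm2_vec by simp
  have ncc: "nc' = (c$1 - x$1)^2 + (c$2 - x$2)^2" unfolding nc'_def norm2_vec by simp
  have R1: "2 * D * (a$1 - x$1) + w1 = (na + nb) * (b$2 - a$2) + (nb + nc') * (c$2 - b$2) + (nc' + na) * (a$2 - c$2)"
    unfolding na nb ncc w1_def D_def cross_def vector_minus_component using pt1[where xa="a$1" and ya="a$2" and xb="b$1" and yb="b$2" and xc="c$1" and yc="c$2" and xq="x$1" and yq="x$2"]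
    by (simp add: algebra_simps)
  have R2: "2 * D * (a$2 - x$2) + w2 = (na + nb) * (- (b$1 - a$1)) + (nb + nc') * (- (c$1 - b$1)) + (nc' + na) * (- (a$1 - c$1))"
    unfolding na nb ncc w2_def D_def cross_def vector_minus_component using pt2[where xa="a$1" and ya="a$2" and xb="b$1" and yb="b$2" and xc="c$1" and yc="c$2" and xq="x$1" and yq="x$2"]
    by (simp add: algebra_simps)
  have L1: "\<bar>D\<bar> / 2 * (a$1 + w1 / (2 * D) - x$1) = s * ((na + nb) * (b$2 - a$2) + (nb + nc') * (c$2 - b$2) + (nc' + na) * (a$2 - c$2)) / 4"
    using comp_lemma[OF D0 R1] by (simp add: s_def)
  have L2: "\<bar>D\<bar> / 2 * (a$2 + w2 / (2 * D) - x$2) = s * ((na + nb) * (- (b$1 - a$1)) + (nb + nc') * (- (c$1 - b$1)) + (nc' + na) * (- (a$1 - c$1))) / 4"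
    using comp_lemma[OF D0 R2] by (simp add: s_def)
  have V1: "(area (convex hull {a, b, c}) *\<^sub>R (ccenter a b c - x))$1 = \<bar>D\<bar> / 2 * (a$1 + w1 / (2 * D) - x$1)"
    by (simp add: area_tri D_def[symmetric] C1)
  have V2: "(area (convex hull {a, b, c}) *\<^sub>R (ccenter a b c - x))$2 = \<bar>D\<bar> / 2 * (a$2 + w2 / (2 * D) - x$2)"
    by (simp add: area_tri D_def[symmetric] C2)
  have W1: "((s * (na + nb) / 4) *\<^sub>R perp (b - a) + (s * (nb + nc') / 4) *\<^sub>R perp (c - b) + (s * (nc' + na) / 4) *\<^sub>R perp (a - c))$1
     = s * ((na + nb) * (b$2 - a$2) + (nb + nc') * (c$2 - b$2) + (nc' + na) * (a$2 - c$2)) / 4"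
    by (simp add: field_simps)
  have W2: "((s * (na + nb) / 4) *\<^sub>R perp (b - a) + (s * (nb + nc') / 4) *\<^sub>R perp (c - b) + (s * (nc' + na) / 4) *\<^sub>R perp (a - c))$2
     = s * ((na + nb) * (- (b$1 - a$1)) + (nb + nc') * (- (c$1 - b$1)) + (nc' + na) * (- (a$1 - c$1))) / 4"
    by (simp add: field_simps)
  have "area (convex hull {a, b, c}) *\<^sub>R (ccenter a b c - x) =
     (s * (na + nb) / 4) *\<^sub>R perp (b - a) + (s * (nb + nc') / 4) *\<^sub>R perp (c - b) + (s * (nc' + na) / 4) *\<^sub>R perp (a - c)"
    unfolding vec2_eq V1 V2 W1 W2 L1 L2 by simp
  then show ?thesis
    unfolding circ[OF nc] f_def[symmetric] sum f1 f2 f3 na_def nb_def nc'_def .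
qed



lemma other_tri:
  assumes ct: "conforming_triangulation M Q" and T: "T \<in> M"
    and e: "closed_segment a b \<in> edges T" and ab: "a \<noteq> b"
  shows "\<exists>d. \<not> collinear {a, b, d} \<and> T = convex hull {a, b, d}"
proof -
  obtain p q r where pqr: "\<not> collinear {p, q, r}" "T = convex hull {p, q, r}" "closed_segment a b = closed_segment p q"
    using tri_edge[OF ct_facts(2)[OF ct T] e] by blast
  from seg_eq[OF ab pqr(3)] show ?thesis
  proof
    assume "p = a \<and> q = b" then show ?thesis using pqr by blast
  next
    assume "p = b \<and> q = a"
    then have "\<not> collinear {a, b, r} \<and> T = convex hull {a, b, r}" using pqr by (simp add: insert_commute)
    then show ?thesis by blast
  qed
qed

lemma three_neg: "(x::real) * y < 0 \<Longrightarrow> y * z < 0 \<Longrightarrow> x * z < 0 \<Longrightarrow> False"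
  by (auto simp: mult_less_0_iff)

lemma frontierA:
  assumes ct: "conforming_triangulation M Q"
    and T0: "convex hull {a, b, c} \<in> M" and nc: "\<not> collinear {a, b, c}"
    and no: "\<forall>T\<in>M. T \<noteq> convex hull {a, b, c} \<longrightarrow> closed_segment a b \<notin> edges T"
  shows "closed_segment a b \<subseteq> frontier Q"
proof -
  have ab: "a \<noteq> b" using nc_distinct[OF nc] by simp
  have TQ: "convex hull {a, b, c} \<subseteq> Q" using ct_facts(3)[OF ct] T0 by blast
  have "open_segment a b \<subseteq> frontier Q"
  proof
    fix p assume p: "p \<in> open_segment a b"
    have pc: "p \<in> closed_segment a b" using p open_closed_segment by blast
    have pQ: "p \<in> Q" using pc segments_subset_convex_hull(1) TQ by blast
    obtain S where S: "open S" "p \<in> S" "\<forall>y\<in>S. y \<in> Q \<longrightarrow> y \<in> convex hull {a, b, c}"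
      using noshare[OF ct T0 nc no p] by blast
    have "p \<notin> interior Q"
    proof
      assume pi: "p \<in> interior Q"
      have "open (interior Q \<inter> S)" using S(1) by blast
      then obtain e where e: "e > 0" "ball p e \<subseteq> interior Q \<inter> S"
        using pi S(2) open_contains_ball by blast
      define y where "y = p + (e / 2) *\<^sub>R outn a b c"
      have "dist p y = e / 2" using outn_unit[OF ab, of c] e(1) by (simp add: y_def dist_norm)
      then have "y \<in> ball p e" using e(1) by simp
      then have "y \<in> Q" "y \<in> S" using e(2) interior_subset by blast+
      then have "y \<in> convex hull {a, b, c}" using S(3) by blast
      moreover have "y \<notin> convex hull {a, b, c}" unfolding y_def by (rule outer_pts[OF nc pc]) (use e in simp)
      ultimately show False by blast
    qed
    then show "p \<in> frontier Q" using pQ closure_subset unfolding frontier_def by blast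
  qed
  then have "closure (open_segment a b) \<subseteq> frontier Q" by (intro closure_minimal) auto
  then show ?thesis using ab by simp
qed

lemma edge_sum:
  assumes ct: "conforming_triangulation M Q"
    and T0: "convex hull {a, b, c} \<in> M" and nc: "\<not> collinear {a, b, c}"
  shows "(\<Sum>T\<in>{T\<in>M. closed_segment a b \<in> edges T}. outer_normal T (closed_segment a b)) =
         (if closed_segment a b \<subseteq> frontier Q then outer_normal Q (closed_segment a b) else 0)"
proof -
  have ab: "a \<noteq> b" using nc_distinct[OF nc] by simp
  have e0: "closed_segment a b \<in> edges (convex hull {a, b, c})" using edges_tri[OF nc] by simp
  have m: "(1/2) *\<^sub>R (a + b) \<in> open_segment a b" by (rule mid_open[OF ab])
  show ?thesis
  proof (cases "\<forall>T\<in>M. T \<noteq> convex hull {a, b, c} \<longrightarrow> closed_segment a b \<notin> edges T")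
    case True
    have S: "{T\<in>M. closed_segment a b \<in> edges T} = {convex hull {a, b, c}}" using True T0 e0 by blast
    have fr: "closed_segment a b \<subseteq> frontier Q" by (rule frontierA[OF ct T0 nc True])
    have TQ: "convex hull {a, b, c} \<subseteq> Q" using ct_facts(3)[OF ct] T0 by blast
    have "outer_normal Q (closed_segment a b) = outn a b c"
      by (rule ON[OF nc TQ noshare[OF ct T0 nc True m]])
    then show ?thesis unfolding S using fr ON_self[OF nc] by simp
  next
    case False
    then obtain T1 where T1: "T1 \<in> M" "T1 \<noteq> convex hull {a, b, c}" "closed_segment a b \<in> edges T1" by blast
    obtain d where d: "\<not> collinear {a, b, d}" "T1 = convex hull {a, b, d}" using other_tri[OF ct T1(1,3) ab] by blast
    have T1M: "convex hull {a, b, d} \<in> M" and ne: "convex hull {a, b, d} \<noteq> convex hull {a, b, c}"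
      using T1 d by auto
    have neg: "cross (b - a) (c - a) * cross (b - a) (d - a) < 0" by (rule opposite[OF ct T0 nc T1M d(1) ne])
    have S: "{T\<in>M. closed_segment a b \<in> edges T} = {convex hull {a, b, c}, convex hull {a, b, d}}"
    proof
      show "{convex hull {a, b, c}, convex hull {a, b, d}} \<subseteq> {T \<in> M. closed_segment a b \<in> edges T}"
        using T0 e0 T1 d by auto
      show "{T \<in> M. closed_segment a b \<in> edges T} \<subseteq> {convex hull {a, b, c}, convex hull {a, b, d}}"
      proof
        fix T2 assume T2: "T2 \<in> {T \<in> M. closed_segment a b \<in> edges T}"
        obtain e where e: "\<not> collinear {a, b, e}" "T2 = convex hull {a, b, e}"
          using other_tri[OF ct _ _ ab, of T2] T2 by blast
        show "T2 \<in> {convex hull {a, b, c}, convex hull {a, b, d}}"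
        proof (rule ccontr)
          assume "T2 \<notin> {convex hull {a, b, c}, convex hull {a, b, d}}"
          then have n1: "convex hull {a, b, e} \<noteq> convex hull {a, b, c}" and n2: "convex hull {a, b, e} \<noteq> convex hull {a, b, d}"
            using e by auto
          have T2M: "convex hull {a, b, e} \<in> M" using T2 e by simp
          have "cross (b - a) (c - a) * cross (b - a) (e - a) < 0" by (rule opposite[OF ct T0 nc T2M e(1) n1])
          moreover have "cross (b - a) (d - a) * cross (b - a) (e - a) < 0" by (rule opposite[OF ct T1M d(1) T2M e(1) n2])
          ultimately show False using neg three_neg by (metis mult.commute)
        qed
      qed
    qed
    have sumz: "(\<Sum>T\<in>{convex hull {a, b, c}, convex hull {a, b, d}}. outer_normal T (closed_segment a b)) = 0"
      using ne ON_self[OF nc] ON_self[OF d(1)] outn_opp[OF neg] by simp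
    have "(1/2) *\<^sub>R (a + b) \<in> interior Q" by (rule share_interior[OF ct T0 nc T1M d(1) ne m])
    moreover have "(1/2) *\<^sub>R (a + b) \<in> closed_segment a b" using m open_closed_segment by blast
    ultimately have "\<not> closed_segment a b \<subseteq> frontier Q" unfolding frontier_def by blast
    then show ?thesis unfolding S sumz by simp
  qed
qed



lemma integ_tri:
  assumes "compact T" shows "(\<lambda>x::real^2. x) integrable_on T"
proof -
  have "integrable lborel (\<lambda>x. indicator T x *\<^sub>R x)"
    by (rule borel_integrable_compact[OF assms continuous_on_id])
  then have "(\<lambda>x. indicator T x *\<^sub>R x) integrable_on UNIV" by (rule integrable_on_lborel)
  moreover have "(\<lambda>x. indicator T x *\<^sub>R x) = (\<lambda>x. if x \<in> T then x else 0)"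
    by (auto simp: indicator_def)
  ultimately have "(\<lambda>x. if x \<in> T then x else 0) integrable_on UNIV" by simp
  then show ?thesis using integrable_restrict_UNIV by blast
qed

lemma tri_compact: "is_triangle T \<Longrightarrow> compact T"
proof -
  assume "is_triangle T"
  then obtain a b c where "T = convex hull {a, b, c}" unfolding is_triangle_def by blast
  moreover have "compact (convex hull {a, b, c})" by (rule compact_convex_hull) simp
  ultimately show ?thesis by simp
qed

lemma tri_convex: "is_triangle T \<Longrightarrow> convex T"
proof -
  assume "is_triangle T"
  then obtain a b c where "T = convex hull {a, b, c}" unfolding is_triangle_def by blast
  then show ?thesis by simp
qed

lemma tri_area_pos: "is_triangle T \<Longrightarrow> 0 < area T"
proof -
  assume "is_triangle T"
  then obtain a b c where "\<not> collinear {a, b, c}" "T = convex hull {a, b, c}" unfolding is_triangle_def by blast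
  then show ?thesis using area_tri[of a b c] noncoll_cross[of a b c] by simp
qed

lemma negl_pair:
  assumes ct: "conforming_triangulation M Q" and T: "T \<in> M" "T' \<in> M" "T \<noteq> T'"
  shows "negligible (T \<inter> T')"
proof -
  have cl: "closed T" "closed T'" using tri_closed ct_facts(2)[OF ct] T by blast+
  have dis: "interior T \<inter> interior T' = {}" using ct_facts(4)[OF ct T] .
  have "T \<inter> T' \<subseteq> frontier T \<union> frontier T'"
  proof
    fix x assume x: "x \<in> T \<inter> T'"
    have "x \<notin> interior T \<or> x \<notin> interior T'" using dis by blast
    then show "x \<in> frontier T \<union> frontier T'"
      using x closure_closed[OF cl(1)] closure_closed[OF cl(2)] unfolding frontier_def by blast
  qed
  moreover have "negligible (frontier T \<union> frontier T')"
    by (rule negligible_Un[OF negligible_convex_frontier[OF tri_convex[OF ct_facts(2)[OF ct T(1)]]]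
                             negligible_convex_frontier[OF tri_convex[OF ct_facts(2)[OF ct T(2)]]]])
  ultimately show ?thesis using negligible_subset by blast
qed

lemma area_union:
  assumes ct: "conforming_triangulation M Q"
  shows "area Q = (\<Sum>T\<in>M. area T)"
proof -
  have "measure lebesgue (\<Union>M) = (\<Sum>T\<in>M. measure lebesgue T)"
  proof (rule measure_negligible_finite_Union)
    show "finite M" by (rule ct_facts(1)[OF ct])
    show "\<And>S. S \<in> M \<Longrightarrow> S \<in> lmeasurable"
      by (rule lmeasurable_compact[OF tri_compact[OF ct_facts(2)[OF ct]]])
    show "pairwise (\<lambda>S T. negligible (S \<inter> T)) M"
      unfolding pairwise_def using negl_pair[OF ct] by blast
  qed
  then show ?thesis unfolding area_def ct_facts(3)[OF ct] .
qed

lemma integral_union: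
  assumes ct: "conforming_triangulation M Q"
  shows "integral Q (\<lambda>x. x) = (\<Sum>T\<in>M. integral T (\<lambda>x. x))"
proof -
  have "((\<lambda>x. x) has_integral (\<Sum>T\<in>M. integral T (\<lambda>x. x))) (\<Union>M)"
  proof (rule has_integral_Union)
    show "finite M" by (rule ct_facts(1)[OF ct])
    show "\<And>S. S \<in> M \<Longrightarrow> ((\<lambda>x. x) has_integral integral S (\<lambda>x. x)) S"
      by (rule integrable_integral[OF integ_tri[OF tri_compact[OF ct_facts(2)[OF ct]]]])
    show "pairwise (\<lambda>S T. negligible (S \<inter> T)) M"
      unfolding pairwise_def using negl_pair[OF ct] by blast
  qed
  then show ?thesis unfolding ct_facts(3)[OF ct] by (rule integral_unique)
qed

theorem mainTheorem12:
  fixes M :: "(real ^ 2) set set" and Q :: "(real ^ 2) set"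
  assumes "conforming_triangulation M Q"
  shows "(\<Sum>T\<in>M. area T *\<^sub>R (circumcenter T - center_of_mass T)) =
         (\<Sum>\<sigma>\<in>boundary_edges M Q.
            (seg_length \<sigma> *
              (\<Sum>a\<in>endpoints \<sigma>. (norm (a - center_of_mass Q))\<^sup>2) / 4)
            *\<^sub>R outer_normal Q \<sigma>)"
proof -
  note ct = assms
  define xQ where "xQ = center_of_mass Q"
  define h where "h \<sigma> = seg_length \<sigma> * (\<Sum>a\<in>endpoints \<sigma>. (norm (a - xQ))\<^sup>2) / 4" for \<sigma>
  have finM: "finite M" by (rule ct_facts(1)[OF ct])
  show ?thesis
  proof (cases "M = {}")
    case True
    then show ?thesis by (simp add: boundary_edges_def)
  next
    case False
    have PTQ: "area T *\<^sub>R (circumcenter T - xQ) = (\<Sum>\<sigma>\<in>edges T. h \<sigma> *\<^sub>R outer_normal T \<sigma>)" if TM: "T \<in> M" for T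
    proof -
      obtain a b c where "\<not> collinear {a, b, c}" "T = convex hull {a, b, c}"
        using ct_facts(2)[OF ct TM] unfolding is_triangle_def by blast
      then show ?thesis unfolding h_def using PT by blast
    qed
    have com: "area T *\<^sub>R center_of_mass T = integral T (\<lambda>x. x)" if "T \<in> M" for T
      using tri_area_pos[OF ct_facts(2)[OF ct that]] unfolding center_of_mass_def by simp
    have split: "area T *\<^sub>R (circumcenter T - center_of_mass T) =
        area T *\<^sub>R (circumcenter T - xQ) + (area T *\<^sub>R xQ - integral T (\<lambda>x. x))" if "T \<in> M" for T
      using com[OF that] by (simp add: algebra_simps)
    have areaQ: "area Q > 0"
      unfolding area_union[OF ct]
    proof (rule sum_pos[OF finM False])
      fix T assume "T \<in> M" then show "0 < area T" using tri_area_pos ct_facts(2)[OF ct] by blast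
    qed
    have zero: "(\<Sum>T\<in>M. area T *\<^sub>R xQ - integral T (\<lambda>x. x)) = 0"
    proof -
      have "(\<Sum>T\<in>M. area T *\<^sub>R xQ - integral T (\<lambda>x. x)) = area Q *\<^sub>R xQ - integral Q (\<lambda>x. x)"
        unfolding area_union[OF ct] integral_union[OF ct] by (simp add: sum_subtractf scaleR_sum_left)
      also have "\<dots> = 0" using areaQ unfolding xQ_def center_of_mass_def by simp
      finally show ?thesis .
    qed
    have L: "(\<Sum>T\<in>M. area T *\<^sub>R (circumcenter T - center_of_mass T)) = (\<Sum>T\<in>M. \<Sum>\<sigma>\<in>edges T. h \<sigma> *\<^sub>R outer_normal T \<sigma>)"
    proof -
      have "(\<Sum>T\<in>M. area T *\<^sub>R (circumcenter T - center_of_mass T)) =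
          (\<Sum>T\<in>M. area T *\<^sub>R (circumcenter T - xQ)) + (\<Sum>T\<in>M. area T *\<^sub>R xQ - integral T (\<lambda>x. x))"
        using split by (simp add: sum.distrib)
      also have "\<dots> = (\<Sum>T\<in>M. area T *\<^sub>R (circumcenter T - xQ))" using zero by simp
      also have "\<dots> = (\<Sum>T\<in>M. \<Sum>\<sigma>\<in>edges T. h \<sigma> *\<^sub>R outer_normal T \<sigma>)" using PTQ by (rule sum.cong[OF refl])
      finally show ?thesis .
    qed
    define E where "E = \<Union>(edges ` M)"
    have finE: "finite E"
    proof -
      have "finite (edges T)" if TM: "T \<in> M" for T
      proof -
        obtain a b c where "\<not> collinear {a, b, c}" "T = convex hull {a, b, c}"
          using ct_facts(2)[OF ct TM] unfolding is_triangle_def by blast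
        then show ?thesis using edges_tri by simp
      qed
      then show ?thesis unfolding E_def using finM by blast
    qed
    have "(\<Sum>T\<in>M. \<Sum>\<sigma>\<in>edges T. h \<sigma> *\<^sub>R outer_normal T \<sigma>) = (\<Sum>T\<in>M. \<Sum>\<sigma>\<in>{\<sigma>\<in>E. \<sigma> \<in> edges T}. h \<sigma> *\<^sub>R outer_normal T \<sigma>)"
    proof (rule sum.cong[OF refl])
      fix T assume "T \<in> M"
      then have "{\<sigma>\<in>E. \<sigma> \<in> edges T} = edges T" unfolding E_def by blast
      then show "(\<Sum>\<sigma>\<in>edges T. h \<sigma> *\<^sub>R outer_normal T \<sigma>) = (\<Sum>\<sigma>\<in>{\<sigma>\<in>E. \<sigma> \<in> edges T}. h \<sigma> *\<^sub>R outer_normal T \<sigma>)" by simp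
    qed
    also have "\<dots> = (\<Sum>\<sigma>\<in>E. \<Sum>T\<in>{T\<in>M. \<sigma> \<in> edges T}. h \<sigma> *\<^sub>R outer_normal T \<sigma>)"
      by (rule sum.swap_restrict[OF finM finE])
    also have "\<dots> = (\<Sum>\<sigma>\<in>E. if \<sigma> \<subseteq> frontier Q then h \<sigma> *\<^sub>R outer_normal Q \<sigma> else 0)"
    proof (rule sum.cong[OF refl])
      fix \<sigma> assume "\<sigma> \<in> E"
      then obtain T0 where T0: "T0 \<in> M" "\<sigma> \<in> edges T0" unfolding E_def by blast
      obtain a b c where abc: "\<not> collinear {a, b, c}" "T0 = convex hull {a, b, c}" "\<sigma> = closed_segment a b"
        using tri_edge[OF ct_facts(2)[OF ct T0(1)] T0(2)] by blast
      have "(\<Sum>T\<in>{T\<in>M. \<sigma> \<in> edges T}. h \<sigma> *\<^sub>R outer_normal T \<sigma>) = h \<sigma> *\<^sub>R (\<Sum>T\<in>{T\<in>M. \<sigma> \<in> edges T}. outer_normal T \<sigma>)"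
        by (simp add: scaleR_sum_right)
      also have "\<dots> = h \<sigma> *\<^sub>R (if \<sigma> \<subseteq> frontier Q then outer_normal Q \<sigma> else 0)"
      proof -
        have T0': "convex hull {a, b, c} \<in> M" using T0(1) abc(2) by simp
        show ?thesis using edge_sum[OF ct T0' abc(1)] unfolding abc(3)[symmetric] by (rule arg_cong)
      qed
      finally show "(\<Sum>T\<in>{T\<in>M. \<sigma> \<in> edges T}. h \<sigma> *\<^sub>R outer_normal T \<sigma>) = (if \<sigma> \<subseteq> frontier Q then h \<sigma> *\<^sub>R outer_normal Q \<sigma> else 0)"
        by simp
    qed
    also have "\<dots> = (\<Sum>\<sigma>\<in>{\<sigma>\<in>E. \<sigma> \<subseteq> frontier Q}. h \<sigma> *\<^sub>R outer_normal Q \<sigma>)"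
      by (rule sum.inter_filter[OF finE, symmetric])
    also have "{\<sigma>\<in>E. \<sigma> \<subseteq> frontier Q} = boundary_edges M Q"
      unfolding E_def boundary_edges_def by blast
    finally show ?thesis unfolding L h_def xQ_def .
  qed
qed


end
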